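(* Let $G$ be a graph, $k,\ell\ge1$, $S$ an independent set of size $k$, and $J_0=S,J_1,\dots,J_\ell$ independent sets of $G$. Define $\mathcal{C}_0=\{\{(S,k)\}\}$ and, for $i\in\{1,\dots,\ell\}$, let $\mathcal{C}_i$ contain, for every $C\in\mathcal{C}_{i-1}$ and every constraint $(X,b)\in C$, the constraint set $C'$ consisting of: $(N(X)\cap J_i,1)$; $(X\cap J_i,b-1)$ if $b\ge2$ (nothing if $b=1$); and $(X'\cap J_i,b')$ for every other constraint $(X',b')\in C$. Then for every $i\in\{0,\dots,\ell\}$, $\sum_{C\in\mathcal{C}_i}|C|\le (i+1)!$; in particular $\sum_{C\in\mathcal{C}_\ell}|C|\le(\ell+1)!$.
   Context: A constraint is a pair $(X,b)$ with $X\subseteq V(G)$ and $b$ a positive integer; a constraint set is a finite collection of constraints. The collections $\mathcal{C}_i$ and constraint sets are taken with multiplicity (one $C'$ per pair $(C,(X,b))$), and $|C|$ is the number of constraints in $C$. For $X\subseteq V(G)$, $N(X)=\{v\notin X: v\text{ adjacent to some }u\in X\}$. *)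

theory Defs
  imports Main "HOL-Library.Multiset"
begin

definition graph :: "'a set \<Rightarrow> ('a \<Rightarrow> 'a \<Rightarrow> bool) \<Rightarrow> bool" where
  "graph V E \<longleftrightarrow> finite V \<and> (\<forall>u v. E u v \<longrightarrow> u \<in> V \<and> v \<in> V)
     \<and> (\<forall>u v. E u v \<longrightarrow> E v u) \<and> (\<forall>u. \<not> E u u)"

definition indep_set :: "'a set \<Rightarrow> ('a \<Rightarrow> 'a \<Rightarrow> bool) \<Rightarrow> 'a set \<Rightarrow> bool" where
  "indep_set V E I \<longleftrightarrow> I \<subseteq> V \<and> (\<forall>u\<in>I. \<forall>v\<in>I. \<not> E u v)"

definition nbhd :: "'a set \<Rightarrow> ('a \<Rightarrow> 'a \<Rightarrow> bool) \<Rightarrow> 'a set \<Rightarrow> 'a set" where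
  "nbhd V E X = {v \<in> V. v \<notin> X \<and> (\<exists>u\<in>X. E u v)}"

type_synonym 'a constr = "'a set \<times> nat"

definition branch :: "'a set \<Rightarrow> ('a \<Rightarrow> 'a \<Rightarrow> bool) \<Rightarrow> 'a set
    \<Rightarrow> 'a constr multiset \<Rightarrow> 'a constr \<Rightarrow> 'a constr multiset" where
  "branch V E J C c = (case c of (X, b) \<Rightarrow>
     {# (nbhd V E X \<inter> J, 1) #}
     + (if b \<ge> 2 then {# (X \<inter> J, b - 1) #} else {#})
     + image_mset (\<lambda>(X', b'). (X' \<inter> J, b')) (C - {# c #}))"

definition step :: "'a set \<Rightarrow> ('a \<Rightarrow> 'a \<Rightarrow> bool) \<Rightarrow> 'a set
    \<Rightarrow> 'a constr multiset multiset \<Rightarrow> 'a constr multiset multiset" where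
  "step V E J \<C> = (\<Sum>C\<in>#\<C>. image_mset (branch V E J C) C)"

fun constr_sets :: "'a set \<Rightarrow> ('a \<Rightarrow> 'a \<Rightarrow> bool) \<Rightarrow> (nat \<Rightarrow> 'a set) \<Rightarrow> 'a set \<Rightarrow> nat
    \<Rightarrow> nat \<Rightarrow> 'a constr multiset multiset" where
  "constr_sets V E J S k 0 = {# {# (S, k) #} #}"
| "constr_sets V E J S k (Suc i) = step V E (J (Suc i)) (constr_sets V E J S k i)"

end

theory Submission
  imports Defs
begin

lemma size_branch:
  assumes "c \<in># C"
  shows "size (branch V E J C c) \<le> size C + 1"
proof -
  obtain X b where cb: "c = (X, b)" by fastforce
  have "size (branch V E J C c) \<le> 1 + 1 + size (C - {#c#})"
    by (simp add: branch_def cb)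
  also have "\<dots> = size C + 1"
    using assms by (simp add: size_Diff_singleton) (cases C, auto)
  finally show ?thesis .
qed

lemma step_add: "step V E J (add_mset C M) = image_mset (branch V E J C) C + step V E J M"
  by (simp add: step_def)

lemma step_members:
  assumes "C' \<in># step V E J M" "\<forall>C\<in>#M. size C \<le> n"
  shows "size C' \<le> n + 1"
  using assms
proof (induction M)
  case empty then show ?case by (simp add: step_def)
next
  case (add C M)
  show ?case
  proof (cases "C' \<in># step V E J M")
    case True then show ?thesis using add by auto
  next
    case False
    then obtain c where "c \<in># C" "C' = branch V E J C c"
      using add.prems(1) by (auto simp: step_add)
    then show ?thesis using size_branch[of c C V E J] add.prems(2) by auto
  qed
qed

lemma step_sum:
  assumes "\<forall>C\<in>#M. size C \<le> n"
  shows "(\<Sum>C'\<in>#step V E J M. size C') \<le> (n + 1) * (\<Sum>C\<in>#M. size C)"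
  using assms
proof (induction M)
  case empty then show ?case by (simp add: step_def)
next
  case (add C M)
  have "(\<Sum>c\<in>#C. size (branch V E J C c)) \<le> (\<Sum>c\<in>#C. size C + 1)"
    by (rule sum_mset_mono) (rule size_branch)
  also have "\<dots> = size C * (size C + 1)" by simp
  also have "\<dots> \<le> size C * (n + 1)" using add.prems by simp
  finally have h: "(\<Sum>c\<in>#C. size (branch V E J C c)) \<le> (n + 1) * size C" by (simp add: mult.commute)
  have "(\<Sum>C'\<in>#step V E J (add_mset C M). size C')
     = (\<Sum>c\<in>#C. size (branch V E J C c)) + (\<Sum>C'\<in>#step V E J M. size C')"
    by (simp add: step_add image_mset_union multiset.map_comp comp_def)
  also have "\<dots> \<le> (n + 1) * size C + (n + 1) * (\<Sum>C\<in>#M. size C)"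
    using h add by (intro add_mono) auto
  finally show ?case by (simp add: algebra_simps)
qed

lemma cs_size: "\<forall>C\<in>#constr_sets V E J S k i. size C \<le> i + 1"
proof (induction i)
  case 0 then show ?case by simp
next
  case (Suc i) then show ?case using step_members by fastforce
qed

lemma cs_sum: "(\<Sum>C\<in>#constr_sets V E J S k i. size C) \<le> fact (i + 1)"
proof (induction i)
  case 0 then show ?case by simp
next
  case (Suc i)
  have "(\<Sum>C\<in>#constr_sets V E J S k (Suc i). size C) \<le> (i + 2) * (\<Sum>C\<in>#constr_sets V E J S k i. size C)"
    using step_sum[OF cs_size[of V E J S k i], of V E "J (Suc i)"] by simp
  also have "\<dots> \<le> (i + 2) * fact (i + 1)" using Suc by (intro mult_le_mono2)
  also have "\<dots> = fact (Suc i + 1)" by (simp add: fact_Suc)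
  finally show ?case .
qed

theorem lemma3p4:
  fixes V :: "'a set" and E :: "'a \<Rightarrow> 'a \<Rightarrow> bool"
    and S :: "'a set" and J :: "nat \<Rightarrow> 'a set" and k l :: nat
  assumes "graph V E"
    and "k \<ge> 1" and "l \<ge> 1"
    and "indep_set V E S" and "card S = k"
    and "J 0 = S"
    and "\<forall>i\<le>l. indep_set V E (J i)"
  shows "(\<forall>i\<le>l. (\<Sum>C\<in>#constr_sets V E J S k i. size C) \<le> (fact (i + 1) :: nat))
    \<and> (\<Sum>C\<in>#constr_sets V E J S k l. size C) \<le> (fact (l + 1) :: nat)"
  using cs_sum by blast

end
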